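(* Let $\theta_\star\in\mathbb{R}^d$ be fixed, let $\Sigma=\mathbb{E}[XX^\top]=\sum_{j=1}^d\lambda_j(\Sigma)v_jv_j^\top$ with $(v_j)_{j\in[d]}$ an orthonormal eigenbasis, and assume the components $(v_j^\top X)_{j\in[d]}$ are independent and each symmetric. Let $\hat f(x)=\sum_{i=1}^n l_i(x,(X_k)_{k\in[n]})Y_i$ be a linear prediction rule such that for every orthogonal matrix $O$, $l_i(x,(X_k)_{k\in[n]})=l_i(Ox,(OX_k)_{k\in[n]})$ almost surely. Let $\nu$ be the law of $\sum_{j=1}^d\varepsilon_j(v_j^\top\theta_\star)v_j$ with $\varepsilon_j$ i.i.d. Rademacher, so that $H=\mathbb{E}_\nu[\theta\theta^\top]=\sum_j(v_j^\top\theta_\star)^2v_jv_j^\top$ and $\Sigma_{\theta_\star}:=H^{1/2}\Sigma H^{1/2}=\sum_{j\in[d]}\lambda_j(\Sigma)(v_j^\top\theta_\star)^2v_jv_j^\top$. Then $$\mathcal{E}_{\sigma^2}(\hat f)\ge\bar{\mathcal{E}}(\Sigma_{\theta_\star};\sigma^2),$$ where $\bar{\mathcal{E}}(\Sigma_{\theta_\star};\sigma^2)=\inf_{\hat g}\mathbb{E}_{\theta\sim\nu}[\mathcal{E}_{\sigma^2}(\hat g)]$.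
   Context: Setting: $(X,Y)\in\mathbb{R}^d\times\mathbb{R}$ satisfies $Y=X^\top\theta+\epsilon$ with $\mathbb{E}[\epsilon\mid X]=0$, $\mathbb{E}[\epsilon^2\mid X]=\sigma^2$, for a parameter $\theta$ ($\theta=\theta_\star$ on the left-hand side). Training data $(X_i,Y_i)_{i\in[n]}$ are i.i.d. copies of $(X,Y)$, independent of a test pair. A linear prediction rule is $\hat g(x)=\sum_{i=1}^n l_i(x)Y_i$ with each $l_i$ a (possibly random) function of $x$, $(X_i)_{i\in[n]}$ and independent randomness. $R(f)=\mathbb{E}[(Y-f(X))^2]$, $\mathcal{E}_{\sigma^2}(\hat g)=\mathbb{E}[R(\hat g)]-\sigma^2$ (expectation over training data). The infimum defining $\bar{\mathcal{E}}$ is over all linear prediction rules, with $\theta\sim\nu$ drawn independently of the data. *)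

theory Defs
  imports "HOL-Probability.Probability"
begin

text \<open>Joint law of the covariate X (law PX) and the noise e, where K x is the
  conditional law of the noise given X = x.\<close>
definition noise_joint :: "(real^'d) measure \<Rightarrow> (real^'d \<Rightarrow> real measure) \<Rightarrow> ((real^'d) \<times> real) measure" where
  "noise_joint PX K = PX \<bind> (\<lambda>x. distr (K x) (borel \<Otimes>\<^sub>M borel) (\<lambda>e. (x, e)))"

definition data_law :: "(real^'d) measure \<Rightarrow> (real^'d \<Rightarrow> real measure) \<Rightarrow> real^'d \<Rightarrow> ((real^'d) \<times> real) measure" where
  "data_law PX K \<theta> = distr (noise_joint PX K) (borel \<Otimes>\<^sub>M borel) (\<lambda>(x, e). (x, x \<bullet> \<theta> + e))"

text \<open>Linear prediction rule: g(x) = sum_i l_i(x, (X_k)_k, u) Y_i, with u the independent randomness.\<close>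
definition lin_pred :: "nat \<Rightarrow> (nat \<Rightarrow> real^'d \<Rightarrow> (nat \<Rightarrow> real^'d) \<Rightarrow> 'u \<Rightarrow> real)
    \<Rightarrow> (nat \<Rightarrow> (real^'d) \<times> real) \<Rightarrow> 'u \<Rightarrow> real^'d \<Rightarrow> real" where
  "lin_pred n l S u x = (\<Sum>i<n. l i x (restrict (\<lambda>k. fst (S k)) {..<n}) u * snd (S i))"

definition is_linear_rule :: "nat \<Rightarrow> 'u measure \<Rightarrow> (nat \<Rightarrow> real^'d \<Rightarrow> (nat \<Rightarrow> real^'d) \<Rightarrow> 'u \<Rightarrow> real) \<Rightarrow> bool" where
  "is_linear_rule n U l \<longleftrightarrow> prob_space U \<and>
     (\<forall>i<n. (\<lambda>(x, Xs, u). l i x Xs u) \<in> borel \<Otimes>\<^sub>M (PiM {..<n} (\<lambda>_. borel) \<Otimes>\<^sub>M U) \<rightarrow>\<^sub>M borel)"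

text \<open>E[R(g)]: expectation over the n i.i.d. training pairs and the randomness of the
  risk R(g) = E[(Y - g(X))^2] on an independent test pair.\<close>
definition exp_risk :: "nat \<Rightarrow> (real^'d) measure \<Rightarrow> (real^'d \<Rightarrow> real measure) \<Rightarrow> 'u measure
    \<Rightarrow> (nat \<Rightarrow> real^'d \<Rightarrow> (nat \<Rightarrow> real^'d) \<Rightarrow> 'u \<Rightarrow> real) \<Rightarrow> real^'d \<Rightarrow> ennreal" where
  "exp_risk n PX K U l \<theta> =
     (\<integral>\<^sup>+ (S, u). (\<integral>\<^sup>+ (x, y). ennreal ((y - lin_pred n l S u x)^2) \<partial>data_law PX K \<theta>)
        \<partial>(PiM {..<n} (\<lambda>_. data_law PX K \<theta>) \<Otimes>\<^sub>M U))"

definition excess_risk :: "nat \<Rightarrow> (real^'d) measure \<Rightarrow> (real^'d \<Rightarrow> real measure) \<Rightarrow> real \<Rightarrow> 'u measure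
    \<Rightarrow> (nat \<Rightarrow> real^'d \<Rightarrow> (nat \<Rightarrow> real^'d) \<Rightarrow> 'u \<Rightarrow> real) \<Rightarrow> real^'d \<Rightarrow> ereal" where
  "excess_risk n PX K sig2 U l \<theta> = enn2ereal (exp_risk n PX K U l \<theta>) - ereal sig2"

definition avg_excess_risk :: "nat \<Rightarrow> (real^'d) measure \<Rightarrow> (real^'d \<Rightarrow> real measure) \<Rightarrow> real \<Rightarrow> (real^'d) measure
    \<Rightarrow> 'u measure \<Rightarrow> (nat \<Rightarrow> real^'d \<Rightarrow> (nat \<Rightarrow> real^'d) \<Rightarrow> 'u \<Rightarrow> real) \<Rightarrow> ereal" where
  "avg_excess_risk n PX K sig2 \<nu> U l = enn2ereal (\<integral>\<^sup>+ \<theta>. exp_risk n PX K U l \<theta> \<partial>\<nu>) - ereal sig2"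

definition bayes_lin_risk :: "nat \<Rightarrow> (real^'d) measure \<Rightarrow> (real^'d \<Rightarrow> real measure) \<Rightarrow> real \<Rightarrow> (real^'d) measure
    \<Rightarrow> 'v itself \<Rightarrow> ereal" where
  "bayes_lin_risk n PX K sig2 \<nu> (_ :: 'v itself) =
     (INF Ul \<in> {(V :: 'v measure, g). is_linear_rule n V g}. avg_excess_risk n PX K sig2 \<nu> (fst Ul) (snd Ul))"

definition rademacher_law :: "real measure" where
  "rademacher_law = measure_pmf (pmf_of_set {-1, 1})"

definition prior_nu :: "('d::finite \<Rightarrow> real^'d) \<Rightarrow> real^'d \<Rightarrow> (real^'d) measure" where
  "prior_nu v \<theta>s = distr (PiM (UNIV :: 'd set) (\<lambda>_. rademacher_law)) borel
      (\<lambda>\<epsilon>. \<Sum>j\<in>UNIV. (\<epsilon> j * (v j \<bullet> \<theta>s)) *\<^sub>R v j)"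

definition second_moment :: "(real^'d) measure \<Rightarrow> real^'d^'d" where
  "second_moment PX = (\<chi> a b. \<integral> x. x $ a * x $ b \<partial>PX)"

definition outer :: "real^'d \<Rightarrow> real^'d^'d" where
  "outer w = (\<chi> a b. w $ a * w $ b)"

end

theory Submission
  imports Defs
begin

locale nm =
  fixes PX :: "(real^'d::finite) measure" and K :: "real^'d \<Rightarrow> real measure" and sig2 :: real
  assumes PX_prob: "prob_space PX"
    and PX_sets: "sets PX = sets borel"
    and K_kernel: "K \<in> borel \<rightarrow>\<^sub>M prob_algebra borel"
    and noise: "AE x in PX. integrable (K x) (\<lambda>e. e) \<and> (\<integral> e. e \<partial>K x) = 0
                   \<and> integrable (K x) (\<lambda>e. e^2) \<and> (\<integral> e. e^2 \<partial>K x) = sig2"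
begin

interpretation PX: prob_space PX by (rule PX_prob)

lemma K_sub: "K \<in> PX \<rightarrow>\<^sub>M subprob_algebra borel"
  using measurable_prob_algebraD[OF K_kernel] PX_sets by (simp cong: measurable_cong_sets)

lemma Kx: "prob_space (K x)" "sets (K x) = sets borel"
  using measurable_space[OF K_kernel, of x] by (auto simp: space_prob_algebra)

lemma kern_meas: "(\<lambda>x. distr (K x) (borel \<Otimes>\<^sub>M borel) (\<lambda>e. (x, e))) \<in> PX \<rightarrow>\<^sub>M subprob_algebra (borel \<Otimes>\<^sub>M borel)"
  by (rule measurable_distr2[OF _ K_sub]) (simp add: PX_sets cong: measurable_cong_sets)

lemma NJ_sets: "sets (noise_joint PX K) = sets (borel \<Otimes>\<^sub>M borel)"
  unfolding noise_joint_def using PX.not_empty by (subst sets_bind) auto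

lemma NJ_prob: "prob_space (noise_joint PX K)"
  unfolding noise_joint_def
proof (rule PX.prob_space_bind[OF _ kern_meas])
  show "AE x in PX. prob_space (distr (K x) (borel \<Otimes>\<^sub>M borel) (\<lambda>e. (x, e)))"
    by (intro AE_I2 prob_space.prob_space_distr Kx) (simp add: Kx cong: measurable_cong_sets)
qed

lemma DL_sets: "sets (data_law PX K \<theta>) = sets (borel \<Otimes>\<^sub>M borel)"
  unfolding data_law_def by simp

lemma DL_prob: "prob_space (data_law PX K \<theta>)"
  unfolding data_law_def
  by (intro prob_space.prob_space_distr NJ_prob) (simp add: NJ_sets cong: measurable_cong_sets)

lemma L1:
  assumes h[measurable]: "h \<in> borel_measurable (borel \<Otimes>\<^sub>M borel)"
  shows "(\<integral>\<^sup>+p. h p \<partial>data_law PX K \<theta>) = (\<integral>\<^sup>+x. \<integral>\<^sup>+e. h (x, x \<bullet> \<theta> + e) \<partial>K x \<partial>PX)"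
proof -
  have "(\<integral>\<^sup>+p. h p \<partial>data_law PX K \<theta>) = (\<integral>\<^sup>+p. h ((\<lambda>(x, e). (x, x \<bullet> \<theta> + e)) p) \<partial>noise_joint PX K)"
    unfolding data_law_def by (rule nn_integral_distr) (simp_all add: NJ_sets cong: measurable_cong_sets)
  also have "\<dots> = (\<integral>\<^sup>+x. \<integral>\<^sup>+p. h ((\<lambda>(x, e). (x, x \<bullet> \<theta> + e)) p) \<partial>distr (K x) (borel \<Otimes>\<^sub>M borel) (\<lambda>e. (x, e)) \<partial>PX)"
    unfolding noise_joint_def by (rule nn_integral_bind[OF _ kern_meas]) simp
  also have "\<dots> = (\<integral>\<^sup>+x. \<integral>\<^sup>+e. h (x, x \<bullet> \<theta> + e) \<partial>K x \<partial>PX)"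
    by (intro nn_integral_cong, subst nn_integral_distr) (simp_all add: Kx cong: measurable_cong_sets)
  finally show ?thesis .
qed

lemma sig2_nonneg: "0 \<le> sig2"
proof -
  have "\<exists>x. integrable (K x) (\<lambda>e. e^2) \<and> (\<integral> e. e^2 \<partial>K x) = sig2"
  proof (rule ccontr)
    assume nx: "\<not> (\<exists>x. integrable (K x) (\<lambda>e. e^2) \<and> (\<integral> e. e^2 \<partial>K x) = sig2)"
    have "AE x in PX. False" using noise by (rule AE_mp) (rule AE_I2, use nx in blast)
    then show False by simp
  qed
  then obtain x where "(\<integral> e. e^2 \<partial>K x) = sig2" by blast
  moreover have "0 \<le> (\<integral> e. e^2 \<partial>K x)" by simp
  ultimately show ?thesis by simp
qed

lemma L2:
  assumes x: "integrable (K x) (\<lambda>e. e) \<and> (\<integral> e. e \<partial>K x) = 0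
                   \<and> integrable (K x) (\<lambda>e. e^2) \<and> (\<integral> e. e^2 \<partial>K x) = sig2" and b: "0 \<le> b"
  shows "(\<integral>\<^sup>+e. ennreal ((a + c * e)^2 + b) \<partial>K x) = ennreal (a^2 + c^2 * sig2 + b)"
proof -
  interpret Kx: prob_space "K x" by (rule Kx)
  have eq: "(\<lambda>e. (a + c * e)^2 + b) = (\<lambda>e. (a^2 + b) + (2*a*c) * e + c^2 * e^2)"
    by (auto simp: power2_eq_square algebra_simps)
  have int: "integrable (K x) (\<lambda>e. (a + c * e)^2 + b)"
    unfolding eq using x by auto
  have "(\<integral>\<^sup>+e. ennreal ((a + c * e)^2 + b) \<partial>K x) = ennreal (\<integral>e. (a + c * e)^2 + b \<partial>K x)"
    by (rule nn_integral_eq_integral[OF int]) (simp add: b add_nonneg_nonneg)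
  also have "(\<integral>e. (a + c * e)^2 + b \<partial>K x) = a^2 + c^2 * sig2 + b"
    unfolding eq using x by (simp add: Kx.prob_space)
  finally show ?thesis .
qed


lemma PiPX_sets[measurable_cong]: "sets (PiM I (\<lambda>_. PX)) = sets (PiM I (\<lambda>_. borel))"
  by (intro sets_PiM_cong) (auto simp: PX_sets)

lemma PiDL_sets[measurable_cong]: "sets (PiM I (\<lambda>_. data_law PX K \<theta>)) = sets (PiM I (\<lambda>_. borel \<Otimes>\<^sub>M borel))"
  by (intro sets_PiM_cong) (auto simp: DL_sets)

declare DL_sets[measurable_cong] PX_sets[measurable_cong]

lemma L12:
  assumes [measurable]: "a \<in> borel_measurable borel" "c \<in> borel_measurable borel" "b \<in> borel_measurable borel"
    and b: "\<And>x. 0 \<le> b x"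
  shows "(\<integral>\<^sup>+p. ennreal ((a (fst p) + c (fst p) * snd p)^2 + b (fst p)) \<partial>data_law PX K \<theta>)
       = (\<integral>\<^sup>+x. ennreal ((a x + c x * (x \<bullet> \<theta>))^2 + (c x)^2 * sig2 + b x) \<partial>PX)"
proof -
  have "(\<integral>\<^sup>+p. ennreal ((a (fst p) + c (fst p) * snd p)^2 + b (fst p)) \<partial>data_law PX K \<theta>)
     = (\<integral>\<^sup>+x. \<integral>\<^sup>+e. ennreal ((a x + c x * (x \<bullet> \<theta> + e))^2 + b x) \<partial>K x \<partial>PX)"
    by (subst L1) auto
  also have "\<dots> = (\<integral>\<^sup>+x. ennreal ((a x + c x * (x \<bullet> \<theta>))^2 + (c x)^2 * sig2 + b x) \<partial>PX)"
  proof (rule nn_integral_cong_AE)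
    show "AE x in PX. (\<integral>\<^sup>+e. ennreal ((a x + c x * (x \<bullet> \<theta> + e))^2 + b x) \<partial>K x)
         = ennreal ((a x + c x * (x \<bullet> \<theta>))^2 + (c x)^2 * sig2 + b x)"
      using noise
    proof eventually_elim
      case (elim x)
      have "(\<integral>\<^sup>+e. ennreal ((a x + c x * (x \<bullet> \<theta> + e))^2 + b x) \<partial>K x)
          = (\<integral>\<^sup>+e. ennreal (((a x + c x * (x \<bullet> \<theta>)) + c x * e)^2 + b x) \<partial>K x)"
        by (simp add: algebra_simps)
      also have "\<dots> = ennreal ((a x + c x * (x \<bullet> \<theta>))^2 + (c x)^2 * sig2 + b x)"
        by (rule L2[OF elim b])
      finally show ?case .
    qed
  qed
  finally show ?thesis .
qed

lemma claim:
  assumes "finite I"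
  shows "\<And>A c. A \<in> borel_measurable (PiM I (\<lambda>_. borel)) \<Longrightarrow>
     (\<And>i. i \<in> I \<Longrightarrow> c i \<in> borel_measurable (PiM I (\<lambda>_. borel))) \<Longrightarrow>
   (\<integral>\<^sup>+S. ennreal ((A (\<lambda>i\<in>I. fst (S i)) + (\<Sum>i\<in>I. c i (\<lambda>i\<in>I. fst (S i)) * snd (S i)))^2)
       \<partial>PiM I (\<lambda>_. data_law PX K \<theta>))
   = (\<integral>\<^sup>+Xs. ennreal ((A Xs + (\<Sum>i\<in>I. c i Xs * (Xs i \<bullet> \<theta>)))^2 + sig2 * (\<Sum>i\<in>I. (c i Xs)^2))
       \<partial>PiM I (\<lambda>_. PX))"
  using assms
proof (induction I rule: finite_induct)
  case empty
  have r: "(\<lambda>i\<in>{}. f i) = (\<lambda>_. undefined)" for f :: "'i \<Rightarrow> 'z" by auto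
  show ?case by (simp add: PiM_empty r nn_integral_count_space_finite)
next
  case (insert j I)
  note A[measurable] = insert.prems(1)
  note c[measurable] = insert.prems(2)
  let ?DL = "data_law PX K \<theta>"
  interpret D: product_prob_space "\<lambda>_. ?DL" by (intro product_prob_spaceI DL_prob)
  interpret P: product_prob_space "\<lambda>_. PX" by (intro product_prob_spaceI PX_prob)
  interpret DLp: prob_space ?DL by (rule DL_prob)
  define F where "F S = ennreal ((A (\<lambda>i\<in>insert j I. fst (S i)) + (\<Sum>i\<in>insert j I. c i (\<lambda>i\<in>insert j I. fst (S i)) * snd (S i)))^2)" for S
  define A' where "A' p Xs = A (Xs(j := fst p)) + c j (Xs(j := fst p)) * snd p" for p :: "(real^'d) \<times> real" and Xs
  define c' where "c' p i Xs = c i (Xs(j := fst p))" for p :: "(real^'d) \<times> real" and i Xs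
  have upd_meas[measurable]: "(\<lambda>x. (f x)(j := g x)) \<in> N \<rightarrow>\<^sub>M PiM (insert j I) (\<lambda>_. borel)"
    if [measurable]: "f \<in> N \<rightarrow>\<^sub>M PiM I (\<lambda>_. borel)" "g \<in> N \<rightarrow>\<^sub>M borel" for f g and N :: "'z measure"
    using measurable_compose[OF measurable_Pair[OF that] measurable_add_dim] by simp
  have psf1: "pair_sigma_finite (PiM I (\<lambda>_. ?DL)) ?DL"
    by (intro pair_sigma_finite.intro prob_space_imp_sigma_finite prob_space_PiM DL_prob)
  have psf2: "pair_sigma_finite (PiM I (\<lambda>_. PX)) ?DL"
    by (intro pair_sigma_finite.intro prob_space_imp_sigma_finite prob_space_PiM DL_prob PX_prob)
  have F_meas[measurable]: "F \<in> borel_measurable (PiM (insert j I) (\<lambda>_. ?DL))"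
    unfolding F_def by measurable
  have upd: "(\<lambda>i\<in>insert j I. fst ((S(j := p)) i)) = (\<lambda>i\<in>I. fst (S i))(j := fst p)" for S p
    using insert.hyps by (auto simp: fun_eq_iff)
  have "(\<integral>\<^sup>+S. F S \<partial>PiM (insert j I) (\<lambda>_. ?DL)) = (\<integral>\<^sup>+S. \<integral>\<^sup>+p. F (S(j := p)) \<partial>?DL \<partial>PiM I (\<lambda>_. ?DL))"
    by (rule D.product_nn_integral_insert[OF insert.hyps F_meas])
  also have "\<dots> = (\<integral>\<^sup>+S. \<integral>\<^sup>+p. ennreal ((A' p (\<lambda>i\<in>I. fst (S i)) + (\<Sum>i\<in>I. c' p i (\<lambda>i\<in>I. fst (S i)) * snd (S i)))^2) \<partial>?DL \<partial>PiM I (\<lambda>_. ?DL))"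
  proof (intro nn_integral_cong)
    fix S :: "_ \<Rightarrow> (real^'d) \<times> real" and p :: "(real^'d) \<times> real"
    let ?X = "(\<lambda>i\<in>I. fst (S i))(j := fst p)"
    have "(\<Sum>i\<in>insert j I. c i ?X * snd ((S(j := p)) i)) = c j ?X * snd p + (\<Sum>i\<in>I. c i ?X * snd ((S(j := p)) i))"
      using insert.hyps by (simp add: sum.insert)
    also have "(\<Sum>i\<in>I. c i ?X * snd ((S(j := p)) i)) = (\<Sum>i\<in>I. c i ?X * snd (S i))"
      using insert.hyps by (intro sum.cong) auto
    finally have eq: "(\<Sum>i\<in>insert j I. c i ?X * snd ((S(j := p)) i)) = c j ?X * snd p + (\<Sum>i\<in>I. c i ?X * snd (S i))" .
    show "F (S(j := p)) = ennreal ((A' p (\<lambda>i\<in>I. fst (S i)) + (\<Sum>i\<in>I. c' p i (\<lambda>i\<in>I. fst (S i)) * snd (S i)))^2)"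
      unfolding F_def upd A'_def c'_def eq by (simp add: algebra_simps)
  qed
  also have "\<dots> = (\<integral>\<^sup>+p. \<integral>\<^sup>+S. ennreal ((A' p (\<lambda>i\<in>I. fst (S i)) + (\<Sum>i\<in>I. c' p i (\<lambda>i\<in>I. fst (S i)) * snd (S i)))^2) \<partial>PiM I (\<lambda>_. ?DL) \<partial>?DL)"
    by (rule pair_sigma_finite.Fubini'[OF psf1, symmetric]) (unfold A'_def c'_def, measurable)
  also have "\<dots> = (\<integral>\<^sup>+p. \<integral>\<^sup>+Xs. ennreal ((A' p Xs + (\<Sum>i\<in>I. c' p i Xs * (Xs i \<bullet> \<theta>)))^2 + sig2 * (\<Sum>i\<in>I. (c' p i Xs)^2)) \<partial>PiM I (\<lambda>_. PX) \<partial>?DL)"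
    by (intro nn_integral_cong insert.IH) (unfold A'_def c'_def, measurable)
  also have "\<dots> = (\<integral>\<^sup>+Xs. \<integral>\<^sup>+p. ennreal ((A' p Xs + (\<Sum>i\<in>I. c' p i Xs * (Xs i \<bullet> \<theta>)))^2 + sig2 * (\<Sum>i\<in>I. (c' p i Xs)^2)) \<partial>?DL \<partial>PiM I (\<lambda>_. PX))"
    by (rule pair_sigma_finite.Fubini'[OF psf2]) (unfold A'_def c'_def, measurable)
  also have "\<dots> = (\<integral>\<^sup>+Xs. \<integral>\<^sup>+x. ennreal ((A (Xs(j:=x)) + (\<Sum>i\<in>insert j I. c i (Xs(j:=x)) * ((Xs(j:=x)) i \<bullet> \<theta>)))^2 + sig2 * (\<Sum>i\<in>insert j I. (c i (Xs(j:=x)))^2)) \<partial>PX \<partial>PiM I (\<lambda>_. PX))"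
  proof (intro nn_integral_cong)
    fix Xs assume Xs: "Xs \<in> space (PiM I (\<lambda>_. PX))"
    then have Xs': "Xs \<in> space (PiM I (\<lambda>_. borel))" by (simp add: space_PiM PX_sets[THEN sets_eq_imp_space_eq])
    define a where "a x = A (Xs(j:=x)) + (\<Sum>i\<in>I. c i (Xs(j:=x)) * (Xs i \<bullet> \<theta>))" for x
    define cc where "cc x = c j (Xs(j:=x))" for x
    define b where "b x = sig2 * (\<Sum>i\<in>I. (c i (Xs(j:=x)))^2)" for x
    have um[measurable]: "(\<lambda>x. Xs(j:=x)) \<in> borel \<rightarrow>\<^sub>M PiM (insert j I) (\<lambda>_. borel)"
      using measurable_component_update[OF Xs' insert.hyps(2)] .
    have [measurable]: "a \<in> borel_measurable borel" "cc \<in> borel_measurable borel" "b \<in> borel_measurable borel"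
      unfolding a_def cc_def b_def by measurable
    have "(\<integral>\<^sup>+p. ennreal ((A' p Xs + (\<Sum>i\<in>I. c' p i Xs * (Xs i \<bullet> \<theta>)))^2 + sig2 * (\<Sum>i\<in>I. (c' p i Xs)^2)) \<partial>?DL)
        = (\<integral>\<^sup>+p. ennreal ((a (fst p) + cc (fst p) * snd p)^2 + b (fst p)) \<partial>?DL)"
      unfolding A'_def c'_def a_def cc_def b_def by (simp add: algebra_simps)
    also have "\<dots> = (\<integral>\<^sup>+x. ennreal ((a x + cc x * (x \<bullet> \<theta>))^2 + (cc x)^2 * sig2 + b x) \<partial>PX)"
      by (rule L12) (auto simp: b_def sig2_nonneg intro!: mult_nonneg_nonneg sum_nonneg)
    also have "\<dots> = (\<integral>\<^sup>+x. ennreal ((A (Xs(j:=x)) + (\<Sum>i\<in>insert j I. c i (Xs(j:=x)) * ((Xs(j:=x)) i \<bullet> \<theta>)))^2 + sig2 * (\<Sum>i\<in>insert j I. (c i (Xs(j:=x)))^2)) \<partial>PX)"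
    proof (intro nn_integral_cong)
      fix x
      have s1: "(\<Sum>i\<in>insert j I. c i (Xs(j:=x)) * ((Xs(j:=x)) i \<bullet> \<theta>)) = c j (Xs(j:=x)) * (x \<bullet> \<theta>) + (\<Sum>i\<in>I. c i (Xs(j:=x)) * (Xs i \<bullet> \<theta>))"
        using insert.hyps by (simp add: sum.insert) (intro sum.cong, auto)
      have s2: "(\<Sum>i\<in>insert j I. (c i (Xs(j:=x)))^2) = (c j (Xs(j:=x)))^2 + (\<Sum>i\<in>I. (c i (Xs(j:=x)))^2)"
        using insert.hyps by (simp add: sum.insert)
      show "ennreal ((a x + cc x * (x \<bullet> \<theta>))^2 + (cc x)^2 * sig2 + b x) = ennreal ((A (Xs(j:=x)) + (\<Sum>i\<in>insert j I. c i (Xs(j:=x)) * ((Xs(j:=x)) i \<bullet> \<theta>)))^2 + sig2 * (\<Sum>i\<in>insert j I. (c i (Xs(j:=x)))^2))"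
        unfolding s1 s2 a_def cc_def b_def by (simp add: algebra_simps)
    qed
    finally show "(\<integral>\<^sup>+p. ennreal ((A' p Xs + (\<Sum>i\<in>I. c' p i Xs * (Xs i \<bullet> \<theta>)))^2 + sig2 * (\<Sum>i\<in>I. (c' p i Xs)^2)) \<partial>?DL)
        = (\<integral>\<^sup>+x. ennreal ((A (Xs(j:=x)) + (\<Sum>i\<in>insert j I. c i (Xs(j:=x)) * ((Xs(j:=x)) i \<bullet> \<theta>)))^2 + sig2 * (\<Sum>i\<in>insert j I. (c i (Xs(j:=x)))^2)) \<partial>PX)" .
  qed
  also have "\<dots> = (\<integral>\<^sup>+Xs. ennreal ((A Xs + (\<Sum>i\<in>insert j I. c i Xs * (Xs i \<bullet> \<theta>)))^2 + sig2 * (\<Sum>i\<in>insert j I. (c i Xs)^2)) \<partial>PiM (insert j I) (\<lambda>_. PX))"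
    by (rule P.product_nn_integral_insert[OF insert.hyps, symmetric]) measurable
  finally show ?case unfolding F_def .
qed



definition gfun :: "nat \<Rightarrow> (nat \<Rightarrow> real^'d \<Rightarrow> (nat \<Rightarrow> real^'d) \<Rightarrow> 'u \<Rightarrow> real) \<Rightarrow> real^'d \<Rightarrow> real^'d \<Rightarrow> (nat \<Rightarrow> real^'d) \<Rightarrow> 'u \<Rightarrow> ennreal" where
  "gfun n l \<theta> x Xs u = ennreal ((x \<bullet> \<theta> - (\<Sum>i<n. l i x Xs u * (Xs i \<bullet> \<theta>)))^2 + sig2 * (1 + (\<Sum>i<n. (l i x Xs u)^2)))"

lemma risk_formula:
  fixes U :: "'u measure"
  assumes rule: "is_linear_rule n U l"
  shows "exp_risk n PX K U l \<theta> = (\<integral>\<^sup>+u. \<integral>\<^sup>+Xs. \<integral>\<^sup>+x. gfun n l \<theta> x Xs u \<partial>PX \<partial>PiM {..<n} (\<lambda>_. PX) \<partial>U)"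
proof -
  let ?DL = "data_law PX K \<theta>"
  let ?Pi = "PiM {..<n} (\<lambda>_. ?DL)"
  let ?PP = "PiM {..<n} (\<lambda>_. PX)"
  interpret U: prob_space U using rule unfolding is_linear_rule_def by blast
  interpret DLp: prob_space ?DL by (rule DL_prob)
  interpret Pi: prob_space ?Pi by (intro prob_space_PiM DL_prob)
  interpret PP: prob_space ?PP by (intro prob_space_PiM PX_prob)
  interpret PXp: prob_space PX by (rule PX_prob)
  have lm: "(\<lambda>(x, Xs, u). l i x Xs u) \<in> borel \<Otimes>\<^sub>M (PiM {..<n} (\<lambda>_. borel) \<Otimes>\<^sub>M U) \<rightarrow>\<^sub>M borel" if "i < n" for i
    using rule that unfolding is_linear_rule_def by blast
  have l_meas[measurable]: "(\<lambda>z. l i (a z) (b z) (c z)) \<in> N \<rightarrow>\<^sub>M borel"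
    if "i < n" "a \<in> N \<rightarrow>\<^sub>M borel" "b \<in> N \<rightarrow>\<^sub>M PiM {..<n} (\<lambda>_. borel)" "c \<in> N \<rightarrow>\<^sub>M U" for i a b c and N :: "'z measure"
    using measurable_compose[OF measurable_Pair[OF that(2) measurable_Pair[OF that(3,4)]] lm[OF that(1)]] by simp
  define h where "h u S p = ennreal ((snd p - lin_pred n l S u (fst p))^2)" for u S and p :: "(real^'d) \<times> real"
  have h_meas[measurable]: "(\<lambda>z. h (uu z) (SS z) (pp z)) \<in> borel_measurable N"
    if [measurable]: "uu \<in> N \<rightarrow>\<^sub>M U" "SS \<in> N \<rightarrow>\<^sub>M ?Pi" "pp \<in> N \<rightarrow>\<^sub>M ?DL" for uu SS pp and N :: "'z measure"
  proof -
    have [measurable]: "pp \<in> N \<rightarrow>\<^sub>M borel \<Otimes>\<^sub>M borel"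
      using that(3) measurable_cong_sets[OF refl DL_sets] by blast
    have [measurable]: "SS \<in> N \<rightarrow>\<^sub>M PiM {..<n} (\<lambda>_. borel \<Otimes>\<^sub>M borel)"
      using that(2) measurable_cong_sets[OF refl PiDL_sets] by blast
    show ?thesis unfolding h_def lin_pred_def by measurable
  qed
  have Qm[measurable]: "(\<lambda>(S,u). \<integral>\<^sup>+p. h u S p \<partial>?DL) \<in> borel_measurable (?Pi \<Otimes>\<^sub>M U)"
    using DLp.borel_measurable_nn_integral[of "\<lambda>(S,u) p. h u S p" "?Pi \<Otimes>\<^sub>M U"] by (simp add: split_beta')
  have Qm2[measurable]: "(\<lambda>z. \<integral>\<^sup>+p. h (uu z) (SS z) p \<partial>?DL) \<in> borel_measurable N"
    if [measurable]: "uu \<in> N \<rightarrow>\<^sub>M U" "SS \<in> N \<rightarrow>\<^sub>M ?Pi" for uu SS and N :: "'z measure"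
    using DLp.borel_measurable_nn_integral[of "\<lambda>z p. h (uu z) (SS z) p" N] by (simp add: split_beta')
  have psf_UPi: "pair_sigma_finite U ?Pi" "pair_sigma_finite ?DL ?Pi" "pair_sigma_finite ?PP ?DL"
    by (intro pair_sigma_finite.intro prob_space_imp_sigma_finite prob_space_PiM DL_prob PX_prob U.prob_space_axioms)+
  have "exp_risk n PX K U l \<theta> = (\<integral>\<^sup>+(S,u). (\<integral>\<^sup>+p. h u S p \<partial>?DL) \<partial>(?Pi \<Otimes>\<^sub>M U))"
    unfolding exp_risk_def h_def by (intro nn_integral_cong) (auto simp: split_beta')
  also have "\<dots> = (\<integral>\<^sup>+S. \<integral>\<^sup>+u. \<integral>\<^sup>+p. h u S p \<partial>?DL \<partial>U \<partial>?Pi)"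
    by (subst U.nn_integral_fst[symmetric]) (simp_all add: split_beta')
  also have "\<dots> = (\<integral>\<^sup>+u. \<integral>\<^sup>+S. \<integral>\<^sup>+p. h u S p \<partial>?DL \<partial>?Pi \<partial>U)"
    by (rule pair_sigma_finite.Fubini'[OF psf_UPi(1)]) (simp add: split_beta')
  also have "\<dots> = (\<integral>\<^sup>+u. \<integral>\<^sup>+p. \<integral>\<^sup>+S. h u S p \<partial>?Pi \<partial>?DL \<partial>U)"
    by (intro nn_integral_cong pair_sigma_finite.Fubini'[OF psf_UPi(2)]) (simp add: split_beta')
  also have "\<dots> = (\<integral>\<^sup>+u. \<integral>\<^sup>+p. \<integral>\<^sup>+Xs. ennreal ((snd p + (\<Sum>i<n. - l i (fst p) Xs u * (Xs i \<bullet> \<theta>)))^2 + sig2 * (\<Sum>i<n. (- l i (fst p) Xs u)^2)) \<partial>?PP \<partial>?DL \<partial>U)"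
  proof (intro nn_integral_cong)
    fix u and p :: "(real^'d) \<times> real" assume u: "u \<in> space U"
    have [measurable]: "(\<lambda>Xs. l i (fst p) Xs u) \<in> borel_measurable (PiM {..<n} (\<lambda>_. borel))" if "i < n" for i
      using u that by measurable
    show "(\<integral>\<^sup>+S. h u S p \<partial>?Pi) = (\<integral>\<^sup>+Xs. ennreal ((snd p + (\<Sum>i<n. - l i (fst p) Xs u * (Xs i \<bullet> \<theta>)))^2 + sig2 * (\<Sum>i<n. (- l i (fst p) Xs u)^2)) \<partial>?PP)"
      unfolding h_def lin_pred_def
      using claim[of "{..<n}" "\<lambda>_. snd p" "\<lambda>i Xs. - l i (fst p) Xs u"]
      by (simp add: sum_negf)
  qed
  also have "\<dots> = (\<integral>\<^sup>+u. \<integral>\<^sup>+Xs. \<integral>\<^sup>+p. ennreal ((snd p + (\<Sum>i<n. - l i (fst p) Xs u * (Xs i \<bullet> \<theta>)))^2 + sig2 * (\<Sum>i<n. (- l i (fst p) Xs u)^2)) \<partial>?DL \<partial>?PP \<partial>U)"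
  proof (intro nn_integral_cong)
    fix u assume u: "u \<in> space U"
    show "(\<integral>\<^sup>+p. \<integral>\<^sup>+Xs. ennreal ((snd p + (\<Sum>i<n. - l i (fst p) Xs u * (Xs i \<bullet> \<theta>)))^2 + sig2 * (\<Sum>i<n. (- l i (fst p) Xs u)^2)) \<partial>?PP \<partial>?DL) =
      (\<integral>\<^sup>+Xs. \<integral>\<^sup>+p. ennreal ((snd p + (\<Sum>i<n. - l i (fst p) Xs u * (Xs i \<bullet> \<theta>)))^2 + sig2 * (\<Sum>i<n. (- l i (fst p) Xs u)^2)) \<partial>?DL \<partial>?PP)"
    proof (intro pair_sigma_finite.Fubini'[OF psf_UPi(3)])
      have m1: "fst \<in> ?PP \<Otimes>\<^sub>M ?DL \<rightarrow>\<^sub>M PiM {..<n} (\<lambda>_. borel)"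
        using measurable_fst[of ?PP ?DL] measurable_cong_sets[OF refl PiPX_sets] by blast
      have m2: "snd \<in> ?PP \<Otimes>\<^sub>M ?DL \<rightarrow>\<^sub>M borel \<Otimes>\<^sub>M borel"
        using measurable_snd[of ?PP ?DL] measurable_cong_sets[OF refl DL_sets] by blast
      have k: "(\<lambda>z. ennreal ((snd (pp z) + (\<Sum>i<n. - l i (fst (pp z)) (XX z) u * (XX z i \<bullet> \<theta>)))^2 + sig2 * (\<Sum>i<n. (- l i (fst (pp z)) (XX z) u)^2))) \<in> borel_measurable N"
        if [measurable]: "XX \<in> N \<rightarrow>\<^sub>M PiM {..<n} (\<lambda>_. borel)" "pp \<in> N \<rightarrow>\<^sub>M borel \<Otimes>\<^sub>M borel" for XX pp and N :: "'z measure"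
        using u by measurable
      show "(\<lambda>(Xs, p). ennreal ((snd p + (\<Sum>i<n. - l i (fst p) Xs u * (Xs i \<bullet> \<theta>)))^2 + sig2 * (\<Sum>i<n. (- l i (fst p) Xs u)^2))) \<in> borel_measurable (?PP \<Otimes>\<^sub>M ?DL)"
        using k[OF m1 m2] by (simp add: split_beta')
    qed
  qed
  also have "\<dots> = (\<integral>\<^sup>+u. \<integral>\<^sup>+Xs. \<integral>\<^sup>+x. gfun n l \<theta> x Xs u \<partial>PX \<partial>?PP \<partial>U)"
  proof (intro nn_integral_cong)
    fix u Xs assume u: "u \<in> space U" and Xs: "Xs \<in> space ?PP"
    then have Xs': "Xs \<in> space (PiM {..<n} (\<lambda>_. borel))" by (simp add: space_PiM PX_sets[THEN sets_eq_imp_space_eq])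
    define a where "a x = (\<Sum>i<n. - l i x Xs u * (Xs i \<bullet> \<theta>))" for x
    define b where "b x = sig2 * (\<Sum>i<n. (l i x Xs u)^2)" for x
    have am[measurable]: "a \<in> borel_measurable borel" and bm[measurable]: "b \<in> borel_measurable borel"
    proof -
      have lx[measurable]: "(\<lambda>x. l i x Xs u) \<in> borel_measurable borel" if "i < n" for i
        by (rule l_meas[OF that measurable_ident_sets[OF refl] measurable_const[OF Xs'] measurable_const[OF u]])
      show "a \<in> borel_measurable borel" unfolding a_def by measurable
      show "b \<in> borel_measurable borel" unfolding b_def
        by (intro borel_measurable_times borel_measurable_const borel_measurable_sum borel_measurable_power lx) simp
    qed
    have "(\<integral>\<^sup>+p. ennreal ((snd p + (\<Sum>i<n. - l i (fst p) Xs u * (Xs i \<bullet> \<theta>)))^2 + sig2 * (\<Sum>i<n. (- l i (fst p) Xs u)^2)) \<partial>?DL)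
       = (\<integral>\<^sup>+p. ennreal ((a (fst p) + (\<lambda>_. 1) (fst p) * snd p)^2 + b (fst p)) \<partial>?DL)"
      unfolding a_def b_def by (simp add: algebra_simps)
    also have "\<dots> = (\<integral>\<^sup>+x. ennreal ((a x + (\<lambda>_. 1) x * (x \<bullet> \<theta>))^2 + ((\<lambda>_. 1) x)^2 * sig2 + b x) \<partial>PX)"
      by (rule L12[OF am _ bm]) (auto simp: b_def sig2_nonneg intro!: mult_nonneg_nonneg sum_nonneg)
    also have "\<dots> = (\<integral>\<^sup>+x. gfun n l \<theta> x Xs u \<partial>PX)"
      unfolding gfun_def a_def b_def by (intro nn_integral_cong) (simp add: algebra_simps sum_negf)
    finally show "(\<integral>\<^sup>+p. ennreal ((snd p + (\<Sum>i<n. - l i (fst p) Xs u * (Xs i \<bullet> \<theta>)))^2 + sig2 * (\<Sum>i<n. (- l i (fst p) Xs u)^2)) \<partial>?DL)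
       = (\<integral>\<^sup>+x. gfun n l \<theta> x Xs u \<partial>PX)" .
  qed
  finally show ?thesis .
qed
end

definition sg :: "'d set \<Rightarrow> 'd \<Rightarrow> real" where "sg J j = (if j \<in> J then -1 else 1)"

definition reflop :: "('d::finite \<Rightarrow> real^'d) \<Rightarrow> 'd set \<Rightarrow> real^'d \<Rightarrow> real^'d" where
  "reflop v J x = (\<Sum>j\<in>UNIV. (sg J j * (v j \<bullet> x)) *\<^sub>R v j)"

definition Qmat :: "('d::finite \<Rightarrow> real^'d) \<Rightarrow> 'd set \<Rightarrow> real^'d^'d" where
  "Qmat v J = (\<chi> a b. \<Sum>j\<in>UNIV. sg J j * (v j $ a * v j $ b))"

lemma sg_sq[simp]: "sg J j * sg J j = 1" by (simp add: sg_def)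

locale onb =
  fixes v :: "'d::finite \<Rightarrow> real^'d"
  assumes on: "\<forall>i j. v i \<bullet> v j = (if i = j then 1 else 0)"
begin

lemma inner_sum_v: "v k \<bullet> (\<Sum>j\<in>UNIV. c j *\<^sub>R v j) = c k"
proof -
  have e: "\<And>j. v k \<bullet> v j = (if k = j then 1 else 0)" using on by blast
  have "(\<Sum>j\<in>UNIV. c j * (v k \<bullet> v j)) = (\<Sum>j\<in>UNIV. if k = j then c j else 0)"
    by (intro sum.cong) (auto simp: e)
  then show ?thesis by (simp add: inner_sum_right)
qed

lemma complete: "(\<Sum>j\<in>UNIV. (v j \<bullet> x) *\<^sub>R v j) = x"
proof -
  have inj: "inj v"
  proof (rule injI)
    fix i j assume "v i = v j"
    then have "v i \<bullet> v j = 1" using on by (metis)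
    then show "i = j" using on by (metis zero_neq_one)
  qed
  have ind: "independent (range v)"
  proof (rule pairwise_orthogonal_independent)
    show "pairwise orthogonal (range v)"
      using on by (auto simp: pairwise_def orthogonal_def)
    show "0 \<notin> range v"
      using on by (metis (no_types, lifting) imageE inner_zero_left zero_neq_one)
  qed
  have card: "card (range v) = CARD('d)" using inj by (simp add: card_image)
  have span: "UNIV \<subseteq> span (range v)"
    by (rule card_ge_dim_independent[OF _ ind]) (simp_all add: card)
  define y where "y = x - (\<Sum>j\<in>UNIV. (v j \<bullet> x) *\<^sub>R v j)"
  have yv: "v k \<bullet> y = 0" for k
    unfolding y_def inner_diff_right inner_sum_v by simp
  have "orthogonal y y"
  proof (rule orthogonal_to_span)
    show "y \<in> span (range v)" using span by auto
    fix z assume "z \<in> range v" then show "orthogonal y z" using yv by (auto simp: orthogonal_def inner_commute)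
  qed
  then have "y = 0" by (simp add: orthogonal_def)
  then show ?thesis by (simp add: y_def)
qed

lemma inner_refl: "v k \<bullet> reflop v J x = sg J k * (v k \<bullet> x)"
  unfolding reflop_def by (rule inner_sum_v)

lemma refl_sym: "reflop v J x \<bullet> y = x \<bullet> reflop v J y"
  unfolding reflop_def by (simp add: inner_sum_left inner_sum_right inner_commute mult_ac)

lemma refl_invol: "reflop v J (reflop v J x) = x"
proof -
  have "reflop v J (reflop v J x) = (\<Sum>j\<in>UNIV. (v j \<bullet> x) *\<^sub>R v j)"
    unfolding reflop_def[of v J "reflop v J x"] inner_refl by (simp add: mult.assoc[symmetric])
  then show ?thesis using complete by simp
qed

lemma Qmat_mult: "Qmat v J *v x = reflop v J x"
proof -
  have "(Qmat v J *v x) $ a = reflop v J x $ a" for a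
  proof -
    have "(Qmat v J *v x) $ a = (\<Sum>b\<in>UNIV. \<Sum>j\<in>UNIV. sg J j * (v j $ a * v j $ b) * x $ b)"
      by (simp add: Qmat_def matrix_vector_mult_def sum_distrib_right)
    also have "\<dots> = (\<Sum>j\<in>UNIV. \<Sum>b\<in>UNIV. sg J j * (v j $ a * v j $ b) * x $ b)"
      by (rule sum.swap)
    also have "\<dots> = reflop v J x $ a"
      by (simp add: reflop_def sum_component inner_vec_def sum_distrib_left sum_distrib_right mult_ac)
    finally show ?thesis .
  qed
  then show ?thesis by (simp add: vec_eq_iff)
qed

lemma Qmat_orth: "orthogonal_matrix (Qmat v J)"
proof -
  have tr: "transpose (Qmat v J) = Qmat v J"
    by (simp add: Qmat_def transpose_def vec_eq_iff mult.commute)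
  have "Qmat v J ** Qmat v J = mat 1"
    unfolding matrix_eq by (simp add: matrix_vector_mul_assoc[symmetric] Qmat_mult refl_invol)
  then show ?thesis by (simp add: orthogonal_matrix tr)
qed

end

locale setting = nm PX K sig2 + onb v
  for PX :: "(real^'d::finite) measure" and K sig2 and v +
  assumes indep: "prob_space.indep_vars PX (\<lambda>_. borel) (\<lambda>j x. v j \<bullet> x) UNIV"
    and symm: "\<forall>j. distr PX borel (\<lambda>x. v j \<bullet> x) = distr PX borel (\<lambda>x. - (v j \<bullet> x))"
begin

interpretation PX: prob_space PX by (rule PX_prob)

lemma refl_meas[measurable]: "reflop v J \<in> borel \<rightarrow>\<^sub>M borel"
  unfolding reflop_def by measurable

lemma PX_refl: "distr PX borel (reflop v J) = PX"
proof -
  let ?Pi = "PiM UNIV (\<lambda>_::'d. borel :: real measure)"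
  have PXb[measurable_cong]: "sets PX = sets borel" by (rule PX_sets)
  have rvZ: "PX.random_variable borel (\<lambda>x. v j \<bullet> x)" for j by measurable
  define W where "W j x = sg J j * (v j \<bullet> x)" for j x
  have rvW: "PX.random_variable borel (W j)" for j unfolding W_def by measurable
  have indW: "PX.indep_vars (\<lambda>_. borel) W UNIV"
  proof -
    have "PX.indep_vars (\<lambda>_. borel) (\<lambda>j. (\<lambda>t. sg J j * t) \<circ> (\<lambda>x. v j \<bullet> x)) UNIV"
      by (rule PX.indep_vars_compose[OF indep]) measurable
    moreover have "W = (\<lambda>j x. sg J j * (v j \<bullet> x))" by (simp add: W_def fun_eq_iff)
    ultimately show ?thesis by (simp add: comp_def)
  qed
  have dW: "distr PX borel (W j) = distr PX borel (\<lambda>x. v j \<bullet> x)" for j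
  proof (cases "j \<in> J")
    case True
    then have W: "W j = (\<lambda>x. - (v j \<bullet> x))" by (simp add: W_def sg_def fun_eq_iff)
    have s: "distr PX borel (\<lambda>x. v j \<bullet> x) = distr PX borel (\<lambda>x. - (v j \<bullet> x))" using symm by blast
    show ?thesis unfolding W s ..
  next
    case False
    then have W: "W j = (\<lambda>x. v j \<bullet> x)" by (simp add: W_def sg_def fun_eq_iff)
    show ?thesis unfolding W ..
  qed
  have eqZ: "distr PX ?Pi (\<lambda>x. \<lambda>j\<in>UNIV. v j \<bullet> x) = (\<Pi>\<^sub>M j\<in>UNIV. distr PX borel (\<lambda>x. v j \<bullet> x))"
    using PX.indep_vars_iff_distr_eq_PiM[where I=UNIV and M'="\<lambda>_. borel" and X="\<lambda>j x. v j \<bullet> x"] indep rvZ by simp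
  have eqW: "distr PX ?Pi (\<lambda>x. \<lambda>j\<in>UNIV. W j x) = (\<Pi>\<^sub>M j\<in>UNIV. distr PX borel (W j))"
    using PX.indep_vars_iff_distr_eq_PiM[where I=UNIV and M'="\<lambda>_. borel" and X=W] indW rvW by simp
  have ZW: "distr PX ?Pi (\<lambda>x. \<lambda>j\<in>UNIV. W j x) = distr PX ?Pi (\<lambda>x. \<lambda>j\<in>UNIV. v j \<bullet> x)"
    unfolding eqZ eqW dW ..
  define Rec where "Rec \<zeta> = (\<Sum>j\<in>UNIV. \<zeta> j *\<^sub>R v j)" for \<zeta> :: "'d \<Rightarrow> real"
  have Rec_m[measurable]: "Rec \<in> ?Pi \<rightarrow>\<^sub>M borel" unfolding Rec_def by measurable
  have m1: "(\<lambda>x. \<lambda>j\<in>UNIV. W j x) \<in> PX \<rightarrow>\<^sub>M ?Pi" unfolding W_def by measurable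
  have m2: "(\<lambda>x. \<lambda>j\<in>UNIV. v j \<bullet> x) \<in> PX \<rightarrow>\<^sub>M ?Pi" by measurable
  have "distr PX borel (reflop v J) = distr PX borel (Rec \<circ> (\<lambda>x. \<lambda>j\<in>UNIV. W j x))"
    by (intro distr_cong) (auto simp: Rec_def W_def reflop_def)
  also have "\<dots> = distr (distr PX ?Pi (\<lambda>x. \<lambda>j\<in>UNIV. W j x)) borel Rec"
    by (rule distr_distr[OF Rec_m m1, symmetric])
  also have "\<dots> = distr (distr PX ?Pi (\<lambda>x. \<lambda>j\<in>UNIV. v j \<bullet> x)) borel Rec"
    unfolding ZW ..
  also have "\<dots> = distr PX borel (Rec \<circ> (\<lambda>x. \<lambda>j\<in>UNIV. v j \<bullet> x))"
    by (rule distr_distr[OF Rec_m m2])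
  also have "\<dots> = distr PX borel (\<lambda>x. x)"
    by (intro distr_cong) (auto simp: Rec_def complete)
  also have "\<dots> = PX" by (rule distr_id2) (simp add: PX_sets)
  finally show ?thesis .
qed

lemma PX_refl': "distr PX PX (reflop v J) = PX"
proof -
  have "distr PX PX (reflop v J) = distr PX borel (reflop v J)"
    by (rule distr_cong) (simp_all add: PX_sets)
  then show ?thesis using PX_refl by simp
qed

end

locale setting2 = setting PX K sig2 v
  for PX :: "(real^'d::finite) measure" and K sig2 and v +
  fixes n :: nat and U :: "'u measure" and l :: "nat \<Rightarrow> real^'d \<Rightarrow> (nat \<Rightarrow> real^'d) \<Rightarrow> 'u \<Rightarrow> real"
  assumes rule: "is_linear_rule n U l"
    and invariant: "\<forall>Q :: real^'d^'d. orthogonal_matrix Q \<longrightarrow> (\<forall>i<n.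
        AE p in PX \<Otimes>\<^sub>M (PiM {..<n} (\<lambda>_. PX) \<Otimes>\<^sub>M U).
          (case p of (x, Xs, u) \<Rightarrow> l i x Xs u = l i (Q *v x) (\<lambda>k\<in>{..<n}. Q *v Xs k) u))"
begin

abbreviation "PP \<equiv> PiM {..<n} (\<lambda>_. PX)"
abbreviation "MM \<equiv> PX \<Otimes>\<^sub>M (PP \<Otimes>\<^sub>M U)"

interpretation PX: prob_space PX by (rule PX_prob)
interpretation U: prob_space U using rule unfolding is_linear_rule_def by blast
interpretation PP: prob_space PP by (intro prob_space_PiM PX_prob)
interpretation PPU: prob_space "PP \<Otimes>\<^sub>M U" by (intro prob_space_pair PP.prob_space_axioms U.prob_space_axioms)
interpretation MM: prob_space MM by (intro prob_space_pair PX.prob_space_axioms PPU.prob_space_axioms)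

lemma U_prob: "prob_space U" by (rule U.prob_space_axioms)

lemma l_meas[measurable]: "(\<lambda>z. l i (a z) (b z) (c z)) \<in> N \<rightarrow>\<^sub>M borel"
  if "i < n" "a \<in> N \<rightarrow>\<^sub>M borel" "b \<in> N \<rightarrow>\<^sub>M PiM {..<n} (\<lambda>_. borel)" "c \<in> N \<rightarrow>\<^sub>M U" for i a b c and N :: "'z measure"
proof -
  have lm: "(\<lambda>(x, Xs, u). l i x Xs u) \<in> borel \<Otimes>\<^sub>M (PiM {..<n} (\<lambda>_. borel) \<Otimes>\<^sub>M U) \<rightarrow>\<^sub>M borel"
    using rule that(1) unfolding is_linear_rule_def by blast
  show ?thesis
    using measurable_compose[OF measurable_Pair[OF that(2) measurable_Pair[OF that(3,4)]] lm] by simp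
qed

lemma gfun_meas[measurable]: "(\<lambda>z. gfun n l (tf z) (xf z) (Xf z) (uf z)) \<in> borel_measurable N"
  if [measurable]: "tf \<in> N \<rightarrow>\<^sub>M borel" "xf \<in> N \<rightarrow>\<^sub>M borel" "Xf \<in> N \<rightarrow>\<^sub>M PiM {..<n} (\<lambda>_. borel)" "uf \<in> N \<rightarrow>\<^sub>M U"
  for tf xf Xf uf and N :: "'z measure"
  unfolding gfun_def by measurable

lemma PP_fst: "fst \<in> PP \<Otimes>\<^sub>M N \<rightarrow>\<^sub>M PiM {..<n} (\<lambda>_. borel)"
  using measurable_fst[of PP N] measurable_cong_sets[OF refl PiPX_sets] by blast
lemma PP_snd: "snd \<in> N \<Otimes>\<^sub>M PP \<rightarrow>\<^sub>M PiM {..<n} (\<lambda>_. borel)"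
  using measurable_snd[of N PP] measurable_cong_sets[OF refl PiPX_sets] by blast
lemma PX_fst: "fst \<in> PX \<Otimes>\<^sub>M N \<rightarrow>\<^sub>M borel"
  using measurable_fst[of PX N] measurable_cong_sets[OF refl PX_sets] by blast
lemma PX_snd: "snd \<in> N \<Otimes>\<^sub>M PX \<rightarrow>\<^sub>M borel"
  using measurable_snd[of N PX] measurable_cong_sets[OF refl PX_sets] by blast

lemma int_PP_meas: "(\<lambda>z. \<integral>\<^sup>+Xs. gfun n l (tf z) (xf z) Xs (uf z) \<partial>PP) \<in> borel_measurable N"
  if "tf \<in> N \<rightarrow>\<^sub>M borel" "xf \<in> N \<rightarrow>\<^sub>M borel" "uf \<in> N \<rightarrow>\<^sub>M U" for tf xf uf and N :: "'z measure"
proof -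
  have "(\<lambda>z. gfun n l (tf (fst z)) (xf (fst z)) (snd z) (uf (fst z))) \<in> borel_measurable (N \<Otimes>\<^sub>M PP)"
    by (rule gfun_meas) (auto intro: measurable_compose[OF measurable_fst] that PP_snd)
  then show ?thesis using PP.borel_measurable_nn_integral[of "\<lambda>z Xs. gfun n l (tf z) (xf z) Xs (uf z)" N]
    by (simp add: split_beta')
qed

lemma int_PX_meas: "(\<lambda>z. \<integral>\<^sup>+x. gfun n l (tf z) x (Xf z) (uf z) \<partial>PX) \<in> borel_measurable N"
  if "tf \<in> N \<rightarrow>\<^sub>M borel" "Xf \<in> N \<rightarrow>\<^sub>M PiM {..<n} (\<lambda>_. borel)" "uf \<in> N \<rightarrow>\<^sub>M U" for tf Xf uf and N :: "'z measure"
proof -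
  have "(\<lambda>z. gfun n l (tf (fst z)) (snd z) (Xf (fst z)) (uf (fst z))) \<in> borel_measurable (N \<Otimes>\<^sub>M PX)"
    by (rule gfun_meas) (auto intro: measurable_compose[OF measurable_fst] that PX_snd)
  then show ?thesis using PX.borel_measurable_nn_integral[of "\<lambda>z x. gfun n l (tf z) x (Xf z) (uf z)" N]
    by (simp add: split_beta')
qed

lemma int_U_meas: "(\<lambda>z. \<integral>\<^sup>+u. gfun n l (tf z) (xf z) (Xf z) u \<partial>U) \<in> borel_measurable N"
  if "tf \<in> N \<rightarrow>\<^sub>M borel" "xf \<in> N \<rightarrow>\<^sub>M borel" "Xf \<in> N \<rightarrow>\<^sub>M PiM {..<n} (\<lambda>_. borel)" for tf xf Xf and N :: "'z measure"
proof -
  have "(\<lambda>z. gfun n l (tf (fst z)) (xf (fst z)) (Xf (fst z)) (snd z)) \<in> borel_measurable (N \<Otimes>\<^sub>M U)"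
    by (rule gfun_meas) (auto intro: measurable_compose[OF measurable_fst] that)
  then show ?thesis using U.borel_measurable_nn_integral[of "\<lambda>z u. gfun n l (tf z) (xf z) (Xf z) u" N]
    by (simp add: split_beta')
qed

lemma int_PP_PX_meas: "(\<lambda>z. \<integral>\<^sup>+Xs. \<integral>\<^sup>+x. gfun n l (tf z) x Xs (uf z) \<partial>PX \<partial>PP) \<in> borel_measurable N"
  if "tf \<in> N \<rightarrow>\<^sub>M borel" "uf \<in> N \<rightarrow>\<^sub>M U" for tf uf and N :: "'z measure"
proof -
  have "(\<lambda>z. \<integral>\<^sup>+x. gfun n l (tf (fst z)) x (snd z) (uf (fst z)) \<partial>PX) \<in> borel_measurable (N \<Otimes>\<^sub>M PP)"
    by (rule int_PX_meas) (auto intro: measurable_compose[OF measurable_fst] that PP_snd)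
  then show ?thesis using PP.borel_measurable_nn_integral[of "\<lambda>z Xs. \<integral>\<^sup>+x. gfun n l (tf z) x Xs (uf z) \<partial>PX" N]
    by (simp add: split_beta')
qed


lemma G_eq: "exp_risk n PX K U l \<theta> = (\<integral>\<^sup>+p. gfun n l \<theta> (fst p) (fst (snd p)) (snd (snd p)) \<partial>MM)"
proof -
  have ps1: "pair_sigma_finite PX PP" "pair_sigma_finite PX U" "pair_sigma_finite PP U"
    by (intro pair_sigma_finite.intro prob_space_imp_sigma_finite PX.prob_space_axioms PP.prob_space_axioms U.prob_space_axioms)+
  have c: "(\<lambda>_. \<theta>) \<in> N \<rightarrow>\<^sub>M borel" for N :: "'z measure" by simp
  have "exp_risk n PX K U l \<theta> = (\<integral>\<^sup>+u. \<integral>\<^sup>+Xs. \<integral>\<^sup>+x. gfun n l \<theta> x Xs u \<partial>PX \<partial>PP \<partial>U)"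
    by (rule risk_formula[OF rule])
  also have "\<dots> = (\<integral>\<^sup>+u. \<integral>\<^sup>+x. \<integral>\<^sup>+Xs. gfun n l \<theta> x Xs u \<partial>PP \<partial>PX \<partial>U)"
  proof (intro nn_integral_cong)
    fix u assume u: "u \<in> space U"
    show "(\<integral>\<^sup>+Xs. \<integral>\<^sup>+x. gfun n l \<theta> x Xs u \<partial>PX \<partial>PP) = (\<integral>\<^sup>+x. \<integral>\<^sup>+Xs. gfun n l \<theta> x Xs u \<partial>PP \<partial>PX)"
    proof (rule pair_sigma_finite.Fubini'[OF ps1(1)])
      show "(\<lambda>(x, Xs). gfun n l \<theta> x Xs u) \<in> borel_measurable (PX \<Otimes>\<^sub>M PP)"
        using gfun_meas[OF c PX_fst[of PP] PP_snd[of PX] measurable_const[OF u]] by (simp add: split_beta')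
    qed
  qed
  also have "\<dots> = (\<integral>\<^sup>+x. \<integral>\<^sup>+u. \<integral>\<^sup>+Xs. gfun n l \<theta> x Xs u \<partial>PP \<partial>U \<partial>PX)"
  proof (rule pair_sigma_finite.Fubini'[OF ps1(2)])
    show "(\<lambda>(x, u). \<integral>\<^sup>+Xs. gfun n l \<theta> x Xs u \<partial>PP) \<in> borel_measurable (PX \<Otimes>\<^sub>M U)"
      using int_PP_meas[OF c PX_fst[of U] measurable_snd] by (simp add: split_beta')
  qed
  also have "\<dots> = (\<integral>\<^sup>+x. \<integral>\<^sup>+Xs. \<integral>\<^sup>+u. gfun n l \<theta> x Xs u \<partial>U \<partial>PP \<partial>PX)"
  proof (intro nn_integral_cong)
    fix x assume x: "x \<in> space PX"
    then have x': "x \<in> space borel" by simp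
    show "(\<integral>\<^sup>+u. \<integral>\<^sup>+Xs. gfun n l \<theta> x Xs u \<partial>PP \<partial>U) = (\<integral>\<^sup>+Xs. \<integral>\<^sup>+u. gfun n l \<theta> x Xs u \<partial>U \<partial>PP)"
    proof (rule pair_sigma_finite.Fubini'[OF ps1(3)])
      show "(\<lambda>(Xs, u). gfun n l \<theta> x Xs u) \<in> borel_measurable (PP \<Otimes>\<^sub>M U)"
        using gfun_meas[OF c measurable_const[OF x'] PP_fst[of U] measurable_snd] by (simp add: split_beta')
    qed
  qed
  also have "\<dots> = (\<integral>\<^sup>+x. \<integral>\<^sup>+q. gfun n l \<theta> x (fst q) (snd q) \<partial>(PP \<Otimes>\<^sub>M U) \<partial>PX)"
  proof (intro nn_integral_cong)
    fix x assume x: "x \<in> space PX"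
    then have x': "x \<in> space borel" by simp
    show "(\<integral>\<^sup>+Xs. \<integral>\<^sup>+u. gfun n l \<theta> x Xs u \<partial>U \<partial>PP) = (\<integral>\<^sup>+q. gfun n l \<theta> x (fst q) (snd q) \<partial>(PP \<Otimes>\<^sub>M U))"
      using U.nn_integral_fst[of "\<lambda>q. gfun n l \<theta> x (fst q) (snd q)" PP]
        gfun_meas[OF c measurable_const[OF x'] PP_fst[of U] measurable_snd] by simp
  qed
  also have "\<dots> = (\<integral>\<^sup>+p. gfun n l \<theta> (fst p) (fst (snd p)) (snd (snd p)) \<partial>MM)"
    using PPU.nn_integral_fst[of "\<lambda>p. gfun n l \<theta> (fst p) (fst (snd p)) (snd (snd p))" PX]
      gfun_meas[OF c PX_fst[of "PP \<Otimes>\<^sub>M U"] measurable_compose[OF measurable_snd PP_fst[of U]] measurable_compose[OF measurable_snd measurable_snd]]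
    by simp
  finally show ?thesis .
qed


lemma MM_distr: "distr MM MM (\<lambda>p. (reflop v J (fst p), (compose {..<n} (reflop v J) (fst (snd p)), snd (snd p)))) = MM"
proof -
  let ?D = "reflop v J"
  have Dm: "?D \<in> PX \<rightarrow>\<^sub>M PX" using refl_meas by (simp add: PX_sets cong: measurable_cong_sets)
  have cm: "compose {..<n} ?D \<in> PP \<rightarrow>\<^sub>M PP"
    unfolding compose_def
    apply (rule measurable_restrict)
    apply (rule measurable_compose[OF _ Dm])
    apply (rule measurable_component_singleton)
    by simp
  have "distr PP PP (compose {..<n} ?D) = PiM {..<n} (\<lambda>_. distr PX PX ?D)"
    by (rule distr_PiM_finite_prob_space') (auto intro: PX_prob Dm)
  then have dPP: "distr PP PP (compose {..<n} ?D) = PP" by (simp add: PX_refl')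
  have dU: "distr U U (\<lambda>x. x) = U" by (rule distr_id)
  have T2: "PP \<Otimes>\<^sub>M U = distr (PP \<Otimes>\<^sub>M U) (PP \<Otimes>\<^sub>M U) (\<lambda>(x, y). (compose {..<n} ?D x, y))"
    using pair_measure_distr[OF cm measurable_ident_sets[OF refl, of U]] dPP dU
    by (simp add: U.sigma_finite_measure_axioms)
  have T2m: "(\<lambda>(x, y). (compose {..<n} ?D x, y)) \<in> PP \<Otimes>\<^sub>M U \<rightarrow>\<^sub>M PP \<Otimes>\<^sub>M U"
    using cm by measurable
  have "distr PX PX ?D \<Otimes>\<^sub>M distr (PP \<Otimes>\<^sub>M U) (PP \<Otimes>\<^sub>M U) (\<lambda>(x, y). (compose {..<n} ?D x, y))
      = distr MM MM (\<lambda>(x, y). (?D x, (\<lambda>(x, y). (compose {..<n} ?D x, y)) y))"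
    by (rule pair_measure_distr[OF Dm T2m]) (simp add: T2[symmetric] PPU.sigma_finite_measure_axioms)
  then have "MM = distr MM MM (\<lambda>(x, y). (?D x, (\<lambda>(x, y). (compose {..<n} ?D x, y)) y))"
    by (simp add: PX_refl' T2[symmetric])
  then show ?thesis by (simp add: split_beta')
qed

lemma risk_refl: "exp_risk n PX K U l (reflop v J t) = exp_risk n PX K U l t"
proof -
  let ?D = "reflop v J"
  let ?T = "\<lambda>p. (reflop v J (fst p), (compose {..<n} (reflop v J) (fst (snd p)), snd (snd p)))"
  let ?g = "\<lambda>p. gfun n l t (fst p) (fst (snd p)) (snd (snd p))"
  have Dm: "?D \<in> PX \<rightarrow>\<^sub>M PX" using refl_meas by (simp add: PX_sets cong: measurable_cong_sets)
  have cm: "compose {..<n} ?D \<in> PP \<rightarrow>\<^sub>M PP"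
    unfolding compose_def
    apply (rule measurable_restrict)
    apply (rule measurable_compose[OF _ Dm])
    apply (rule measurable_component_singleton)
    by simp
  have Tm: "?T \<in> MM \<rightarrow>\<^sub>M MM" using Dm cm by measurable
  have c: "(\<lambda>_. t) \<in> N \<rightarrow>\<^sub>M borel" for N :: "'z measure" by simp
  have gm: "?g \<in> borel_measurable MM"
    using gfun_meas[OF c PX_fst[of "PP \<Otimes>\<^sub>M U"] measurable_compose[OF measurable_snd PP_fst[of U]] measurable_compose[OF measurable_snd measurable_snd]]
    by simp
  have AEinv: "AE p in MM. \<forall>i\<in>{..<n}. (case p of (x, Xs, u) \<Rightarrow> l i x Xs u = l i (Qmat v J *v x) (\<lambda>k\<in>{..<n}. Qmat v J *v Xs k) u)"
    using invariant Qmat_orth by (intro AE_finite_allI) auto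
  have "exp_risk n PX K U l (?D t) = (\<integral>\<^sup>+p. gfun n l (?D t) (fst p) (fst (snd p)) (snd (snd p)) \<partial>MM)"
    by (rule G_eq)
  also have "\<dots> = (\<integral>\<^sup>+p. ?g (?T p) \<partial>MM)"
  proof (rule nn_integral_cong_AE)
    show "AE p in MM. gfun n l (?D t) (fst p) (fst (snd p)) (snd (snd p)) = ?g (?T p)"
      using AEinv
    proof eventually_elim
      case (elim p)
      obtain x Xs u where p: "p = (x, Xs, u)" by (cases p) auto
      have li: "l i x Xs u = l i (?D x) (compose {..<n} ?D Xs) u" if "i < n" for i
        using elim that unfolding p by (simp add: Qmat_mult compose_def)
      have s1: "x \<bullet> ?D t = ?D x \<bullet> t" by (simp add: refl_sym)
      have s2: "(\<Sum>i<n. l i x Xs u * (Xs i \<bullet> ?D t)) = (\<Sum>i<n. l i (?D x) (compose {..<n} ?D Xs) u * (compose {..<n} ?D Xs i \<bullet> t))"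
        by (intro sum.cong refl) (simp add: li refl_sym compose_def)
      have s3: "(\<Sum>i<n. (l i x Xs u)^2) = (\<Sum>i<n. (l i (?D x) (compose {..<n} ?D Xs) u)^2)"
        by (intro sum.cong refl) (simp add: li)
      show ?case unfolding p gfun_def by (simp add: s1 s2 s3)
    qed
  qed
  also have "\<dots> = (\<integral>\<^sup>+p. ?g p \<partial>distr MM MM ?T)"
    by (rule nn_integral_distr[OF Tm, symmetric]) (simp add: gm)
  also have "\<dots> = exp_risk n PX K U l t"
    unfolding MM_distr G_eq ..
  finally show ?thesis .
qed


lemma rad_prob: "prob_space rademacher_law"
  unfolding rademacher_law_def by (rule prob_space_measure_pmf)

lemma prior_meas: "(\<lambda>\<epsilon>. \<Sum>j\<in>UNIV. (\<epsilon> j * (v j \<bullet> t)) *\<^sub>R v j) \<in> PiM (UNIV :: 'd set) (\<lambda>_. rademacher_law) \<rightarrow>\<^sub>M borel"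
proof -
  have c: "(\<lambda>\<epsilon>. \<epsilon> j) \<in> PiM (UNIV :: 'd set) (\<lambda>_. rademacher_law) \<rightarrow>\<^sub>M borel" for j
    using measurable_component_singleton[of j UNIV "\<lambda>_. rademacher_law"]
    by (rule measurable_compose) (unfold rademacher_law_def measurable_pmf_measure1, auto)
  show ?thesis by (intro borel_measurable_sum borel_measurable_scaleR borel_measurable_times c) auto
qed

lemma prior_prob: "prob_space (prior_nu v t)"
  unfolding prior_nu_def
  by (intro prob_space.prob_space_distr prob_space_PiM rad_prob prior_meas)

lemma prior_sets: "sets (prior_nu v t) = sets borel"
  unfolding prior_nu_def by simp

lemma prior_AE: "AE \<theta> in prior_nu v t. exp_risk n PX K U l \<theta> = exp_risk n PX K U l t"
proof -
  let ?R = "PiM (UNIV :: 'd set) (\<lambda>_. rademacher_law)"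
  let ?f = "\<lambda>\<epsilon>. \<Sum>j\<in>UNIV. (\<epsilon> j * (v j \<bullet> t)) *\<^sub>R v j"
  define S where "S = {\<theta>::real^'d. \<forall>j. \<bar>v j \<bullet> \<theta>\<bar> = \<bar>v j \<bullet> t\<bar>}"
  have Sm: "{\<theta> \<in> space borel. \<theta> \<in> S} \<in> sets borel" unfolding S_def by measurable
  have AEc: "AE \<epsilon> in ?R. \<forall>j\<in>UNIV. \<epsilon> j \<in> {-1, 1}"
  proof (rule AE_finite_allI)
    fix j :: 'd
    have eq: "distr ?R rademacher_law (\<lambda>\<epsilon>. \<epsilon> j) = rademacher_law"
      by (rule distr_PiM_component) (auto intro: rad_prob)
    have "AE x in distr ?R rademacher_law (\<lambda>\<epsilon>. \<epsilon> j). x \<in> {-1, 1}"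
      unfolding eq unfolding rademacher_law_def
      by (simp add: AE_measure_pmf_iff)
    then show "AE \<epsilon> in ?R. \<epsilon> j \<in> {-1, 1}"
      by (rule AE_distrD[rotated]) simp
  qed simp
  have "AE \<epsilon> in ?R. ?f \<epsilon> \<in> S"
    using AEc
  proof eventually_elim
    case (elim \<epsilon>)
    have "\<bar>v k \<bullet> ?f \<epsilon>\<bar> = \<bar>v k \<bullet> t\<bar>" for k
    proof -
      have "v k \<bullet> ?f \<epsilon> = \<epsilon> k * (v k \<bullet> t)" by (rule inner_sum_v)
      moreover have "\<epsilon> k \<in> {-1, 1}" using elim by blast
      ultimately show ?thesis by (auto simp: abs_mult)
    qed
    then show ?case by (simp add: S_def)
  qed
  then have AES: "AE \<theta> in prior_nu v t. \<theta> \<in> S"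
    unfolding prior_nu_def by (subst AE_distr_iff[OF prior_meas Sm])
  show ?thesis
    using AES
  proof eventually_elim
    case (elim \<theta>)
    define J where "J = {j. v j \<bullet> \<theta> \<noteq> v j \<bullet> t}"
    have "v j \<bullet> \<theta> = sg J j * (v j \<bullet> t)" for j
      using elim unfolding S_def J_def sg_def by (auto simp: abs_eq_iff)
    then have "\<theta> = reflop v J t"
      using complete[of \<theta>] unfolding reflop_def by simp
    then show ?case using risk_refl by simp
  qed
qed

end

lemma exists_below_integral:
  assumes M: "prob_space M" and f[measurable]: "f \<in> borel_measurable M"
  shows "\<exists>x\<in>space M. f x \<le> (\<integral>\<^sup>+y. f y \<partial>M)"
proof (rule ccontr)
  interpret M: prob_space M by (rule M)
  assume "\<not> ?thesis"
  then have lt: "\<And>x. x \<in> space M \<Longrightarrow> (\<integral>\<^sup>+y. f y \<partial>M) < f x" by (auto simp: not_le)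
  let ?I = "\<integral>\<^sup>+y. f y \<partial>M"
  show False
  proof (cases "?I = \<infinity>")
    case True
    obtain x where "x \<in> space M" using M.not_empty by blast
    with lt[OF this] True show False by simp
  next
    case False
    have "(\<integral>\<^sup>+x. ?I \<partial>M) < (\<integral>\<^sup>+x. f x \<partial>M)"
    proof (rule nn_integral_less)
      show "(\<lambda>x. ?I) \<in> borel_measurable M" by simp
      show "f \<in> borel_measurable M" by simp
      show "(\<integral>\<^sup>+x. ?I \<partial>M) \<noteq> \<infinity>" using False by (simp add: M.emeasure_space_1)
      show "AE x in M. ?I \<le> f x" using lt by (intro AE_I2) (simp add: less_imp_le)
      show "\<not> (AE x in M. f x \<le> ?I)"
      proof
        assume "AE x in M. f x \<le> ?I"
        from this AE_space have "AE x in M. False" by eventually_elim (meson lt leD)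
        then show False by simp
      qed
    qed
    then show False by (simp add: M.emeasure_space_1)
  qed
qed

theorem proposition2:
  fixes n :: nat
    and PX :: "(real^'d::finite) measure"
    and K :: "real^'d \<Rightarrow> real measure"
    and sig2 :: real
    and \<theta>s :: "real^'d"
    and v :: "'d \<Rightarrow> real^'d"
    and lam :: "'d \<Rightarrow> real"
    and U :: "'u measure"
    and l :: "nat \<Rightarrow> real^'d \<Rightarrow> (nat \<Rightarrow> real^'d) \<Rightarrow> 'u \<Rightarrow> real"
  assumes PX_prob: "prob_space PX"
    and PX_sets: "sets PX = sets borel"
    and K_kernel: "K \<in> borel \<rightarrow>\<^sub>M prob_algebra borel"
    and noise: "AE x in PX. integrable (K x) (\<lambda>e. e) \<and> (\<integral> e. e \<partial>K x) = 0
                   \<and> integrable (K x) (\<lambda>e. e^2) \<and> (\<integral> e. e^2 \<partial>K x) = sig2"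
    and moments: "integrable PX (\<lambda>x. (norm x)^2)"
    and orthonormal: "\<forall>i j. v i \<bullet> v j = (if i = j then 1 else 0)"
    and eigen: "second_moment PX = (\<Sum>j\<in>UNIV. lam j *\<^sub>R outer (v j))"
    and indep: "prob_space.indep_vars PX (\<lambda>_. borel) (\<lambda>j x. v j \<bullet> x) UNIV"
    and symm: "\<forall>j. distr PX borel (\<lambda>x. v j \<bullet> x) = distr PX borel (\<lambda>x. - (v j \<bullet> x))"
    and rule: "is_linear_rule n U l"
    and invariant: "\<forall>Q :: real^'d^'d. orthogonal_matrix Q \<longrightarrow> (\<forall>i<n.
        AE p in PX \<Otimes>\<^sub>M (PiM {..<n} (\<lambda>_. PX) \<Otimes>\<^sub>M U).
          (case p of (x, Xs, u) \<Rightarrow> l i x Xs u = l i (Q *v x) (\<lambda>k\<in>{..<n}. Q *v Xs k) u))"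
  shows "excess_risk n PX K sig2 U l \<theta>s \<ge> bayes_lin_risk n PX K sig2 (prior_nu v \<theta>s) TYPE('v)"
proof -
  interpret S: setting2 PX K sig2 v n U l
    by (intro setting2.intro setting.intro nm.intro onb.intro setting_axioms.intro setting2_axioms.intro) (fact PX_prob PX_sets K_kernel noise orthonormal indep symm rule invariant)+
  let ?\<nu> = "prior_nu v \<theta>s"
  let ?PP = "PiM {..<n} (\<lambda>_. PX)"
  interpret U: prob_space U by (rule S.U_prob)
  interpret N: prob_space ?\<nu> by (rule S.prior_prob)
  interpret PP: prob_space ?PP by (intro prob_space_PiM PX_prob)
  define r where "r \<theta> u = (\<integral>\<^sup>+Xs. \<integral>\<^sup>+x. S.gfun n l \<theta> x Xs u \<partial>PX \<partial>?PP)" for \<theta> u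
  have risk_r: "exp_risk n PX K U l \<theta> = (\<integral>\<^sup>+u. r \<theta> u \<partial>U)" for \<theta>
    unfolding r_def by (rule S.risk_formula[OF rule])
  have nu_fst: "fst \<in> ?\<nu> \<Otimes>\<^sub>M N \<rightarrow>\<^sub>M borel" for N :: "'z measure"
    using measurable_fst[of ?\<nu> N] measurable_cong_sets[OF refl S.prior_sets] by blast
  have nu_snd: "snd \<in> N \<Otimes>\<^sub>M ?\<nu> \<rightarrow>\<^sub>M borel" for N :: "'z measure"
    using measurable_snd[of N ?\<nu>] measurable_cong_sets[OF refl S.prior_sets] by blast
  have rm: "(\<lambda>(u, \<theta>). r \<theta> u) \<in> borel_measurable (U \<Otimes>\<^sub>M ?\<nu>)"
    using S.int_PP_PX_meas[OF nu_snd measurable_fst] unfolding r_def by (simp add: split_beta')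
  define R where "R u = (\<integral>\<^sup>+\<theta>. r \<theta> u \<partial>?\<nu>)" for u
  have Rm: "R \<in> borel_measurable U"
    using N.borel_measurable_nn_integral[of "\<lambda>u \<theta>. r \<theta> u" U] rm unfolding R_def by (simp add: split_beta')
  obtain u0 where u0: "u0 \<in> space U" and u0le: "R u0 \<le> (\<integral>\<^sup>+u. R u \<partial>U)"
    using exists_below_integral[OF S.U_prob Rm] by blast
  have "(\<integral>\<^sup>+u. R u \<partial>U) = (\<integral>\<^sup>+\<theta>. \<integral>\<^sup>+u. r \<theta> u \<partial>U \<partial>?\<nu>)"
    unfolding R_def
    by (rule pair_sigma_finite.Fubini'[symmetric]) (intro pair_sigma_finite.intro U.sigma_finite_measure_axioms N.sigma_finite_measure_axioms, rule rm)
  also have "\<dots> = (\<integral>\<^sup>+\<theta>. exp_risk n PX K U l \<theta> \<partial>?\<nu>)"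
    by (simp add: risk_r)
  also have "\<dots> = (\<integral>\<^sup>+\<theta>. exp_risk n PX K U l \<theta>s \<partial>?\<nu>)"
    by (rule nn_integral_cong_AE) (rule S.prior_AE)
  also have "\<dots> = exp_risk n PX K U l \<theta>s"
    by (simp add: N.emeasure_space_1)
  finally have Rle: "R u0 \<le> exp_risk n PX K U l \<theta>s" using u0le by simp
  define V :: "'v measure" where "V = return (count_space UNIV) undefined"
  define g0 where "g0 i x Xs (w::'v) = l i x Xs u0" for i x Xs w
  have Vp: "prob_space V" unfolding V_def by (rule prob_space_return) simp
  have g0_rule: "is_linear_rule n V g0"
    unfolding is_linear_rule_def
  proof (intro conjI allI impI Vp)
    fix i assume i: "i < n"
    have "(\<lambda>z. l i (fst z) (fst (snd z)) u0) \<in> borel \<Otimes>\<^sub>M (PiM {..<n} (\<lambda>_. borel) \<Otimes>\<^sub>M V) \<rightarrow>\<^sub>M borel"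
      by (rule S.l_meas[OF i measurable_fst measurable_compose[OF measurable_snd measurable_fst] measurable_const[OF u0]])
    then show "(\<lambda>(x, Xs, u). g0 i x Xs u) \<in> borel \<Otimes>\<^sub>M (PiM {..<n} (\<lambda>_. borel) \<Otimes>\<^sub>M V) \<rightarrow>\<^sub>M borel"
      by (simp add: g0_def split_beta')
  qed
  interpret V: prob_space V by (rule Vp)
  have risk_g0: "exp_risk n PX K V g0 \<theta> = r \<theta> u0" for \<theta>
  proof -
    have "exp_risk n PX K V g0 \<theta> = (\<integral>\<^sup>+w. \<integral>\<^sup>+Xs. \<integral>\<^sup>+x. S.gfun n g0 \<theta> x Xs w \<partial>PX \<partial>?PP \<partial>V)"
      by (rule S.risk_formula[OF g0_rule])
    also have "\<dots> = (\<integral>\<^sup>+w. r \<theta> u0 \<partial>V)"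
      unfolding r_def by (simp add: S.gfun_def g0_def)
    also have "\<dots> = r \<theta> u0" by (simp add: V.emeasure_space_1)
    finally show ?thesis .
  qed
  have avg_le: "(\<integral>\<^sup>+\<theta>. exp_risk n PX K V g0 \<theta> \<partial>?\<nu>) \<le> exp_risk n PX K U l \<theta>s"
    using Rle by (simp add: risk_g0 R_def)
  have "bayes_lin_risk n PX K sig2 ?\<nu> TYPE('v) \<le> avg_excess_risk n PX K sig2 ?\<nu> V g0"
    unfolding bayes_lin_risk_def by (rule INF_lower2[of "(V, g0)"]) (simp_all add: g0_rule)
  also have "\<dots> \<le> excess_risk n PX K sig2 U l \<theta>s"
    unfolding avg_excess_risk_def excess_risk_def
    by (rule ereal_minus_mono) (use avg_le in \<open>simp_all add: less_eq_ennreal.rep_eq[symmetric]\<close>)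
  finally show ?thesis .
qed

end
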